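(* Let $(G,E)$ be a connected simple graph with countable vertex set, $\mu$ a conductance, $d$ a metric on $G$, $\alpha>0$ and $\beta>1$. Assume: (DUHK($\beta$)) there is $C>0$ with $h_n(x,x)\le C/V_d(x,n^{1/\beta})$ for all $x$, $n$; (VG($\alpha$)) $V_d(x,r)\le C(r/s)^\alpha V_d(x,s)$ for all $x$, $r>s>0$; ($\Psi$($\beta$)) there is $C>0$ with $\mathbb{P}^x(\tau(x,r)\le n)\le C\exp(-(r^\beta/(Cn))^{1/(\beta-1)})$ for all $n\ge1$, $r>0$, $x$; (NdU) there is $C_+$ with $d(x,y)\le C_+$ for $x\sim y$; (dL) $r_0:=\inf_{x\ne y}d(x,y)>0$. Then there is $c_1>0$ such that $h_n(x,y)\le\frac{c_1}{V_d(x,n^{1/\beta})}\exp\bigl(-\bigl(\frac{d(x,y)^\beta}{c_1n}\bigr)^{1/(\beta-1)}\bigr)$ for all $x,y\in G$, $n\in\mathbb{N}$.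
   Context: $\mu_x=\sum_{y\sim x}\mu_{xy}$, $V_d(x,r)=\sum_{y\in B_d(x,r)}\mu_y$. $(X_n)$ random walk with $p(x,y)=\mu_{xy}/\mu_x$, $\mathbb{P}^x$ its law from $x$, $p_n(x,y)=\mathbb{P}^x(X_n=y)$, $h_n(x,y)=p_n(x,y)/\mu_y$, $\tau(x,r)=\min\{n:X_n\notin B_d(x,r)\}$. *)

theory Defs
  imports "HOL-Analysis.Analysis"
begin

definition conductance :: "('a \<Rightarrow> 'a \<Rightarrow> bool) \<Rightarrow> ('a \<Rightarrow> 'a \<Rightarrow> real) \<Rightarrow> bool" where
  "conductance E mu \<longleftrightarrow>
     (\<forall>x y. mu x y = mu y x) \<and> (\<forall>x y. mu x y \<ge> 0) \<and> (\<forall>x y. mu x y > 0 \<longleftrightarrow> E x y)"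

definition simple_connected_graph :: "('a \<Rightarrow> 'a \<Rightarrow> bool) \<Rightarrow> bool" where
  "simple_connected_graph E \<longleftrightarrow>
     (\<forall>x y. E x y \<longrightarrow> E y x) \<and> (\<forall>x. \<not> E x x) \<and> (\<forall>x y. E\<^sup>*\<^sup>* x y)"

definition is_metric :: "('a \<Rightarrow> 'a \<Rightarrow> real) \<Rightarrow> bool" where
  "is_metric d \<longleftrightarrow> (\<forall>x y. d x y \<ge> 0) \<and> (\<forall>x y. d x y = 0 \<longleftrightarrow> x = y) \<and>
     (\<forall>x y. d x y = d y x) \<and> (\<forall>x y z. d x z \<le> d x y + d y z)"

definition vmeas :: "('a \<Rightarrow> 'a \<Rightarrow> bool) \<Rightarrow> ('a \<Rightarrow> 'a \<Rightarrow> real) \<Rightarrow> 'a \<Rightarrow> real" where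
  "vmeas E mu x = infsum (\<lambda>y. mu x y) {y. E x y}"

definition dball :: "('a \<Rightarrow> 'a \<Rightarrow> real) \<Rightarrow> 'a \<Rightarrow> real \<Rightarrow> 'a set" where
  "dball d x r = {y. d x y \<le> r}"

definition vol :: "('a \<Rightarrow> 'a \<Rightarrow> bool) \<Rightarrow> ('a \<Rightarrow> 'a \<Rightarrow> real) \<Rightarrow> ('a \<Rightarrow> 'a \<Rightarrow> real) \<Rightarrow> 'a \<Rightarrow> real \<Rightarrow> real" where
  "vol E mu d x r = infsum (vmeas E mu) (dball d x r)"

definition trans_prob :: "('a \<Rightarrow> 'a \<Rightarrow> bool) \<Rightarrow> ('a \<Rightarrow> 'a \<Rightarrow> real) \<Rightarrow> 'a \<Rightarrow> 'a \<Rightarrow> real" where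
  "trans_prob E mu x y = mu x y / vmeas E mu x"

fun pn :: "('a \<Rightarrow> 'a \<Rightarrow> bool) \<Rightarrow> ('a \<Rightarrow> 'a \<Rightarrow> real) \<Rightarrow> nat \<Rightarrow> 'a \<Rightarrow> 'a \<Rightarrow> real" where
  "pn E mu 0 x y = (if x = y then 1 else 0)"
| "pn E mu (Suc n) x y = infsum (\<lambda>z. trans_prob E mu x z * pn E mu n z y) UNIV"

definition hn :: "('a \<Rightarrow> 'a \<Rightarrow> bool) \<Rightarrow> ('a \<Rightarrow> 'a \<Rightarrow> real) \<Rightarrow> nat \<Rightarrow> 'a \<Rightarrow> 'a \<Rightarrow> real" where
  "hn E mu n x y = pn E mu n x y / vmeas E mu y"

text \<open>stay_prob B n y = P^y(X_0, ..., X_n all lie in B).\<close>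
fun stay_prob :: "('a \<Rightarrow> 'a \<Rightarrow> bool) \<Rightarrow> ('a \<Rightarrow> 'a \<Rightarrow> real) \<Rightarrow> 'a set \<Rightarrow> nat \<Rightarrow> 'a \<Rightarrow> real" where
  "stay_prob E mu B 0 y = (if y \<in> B then 1 else 0)"
| "stay_prob E mu B (Suc n) y =
     (if y \<in> B then infsum (\<lambda>z. trans_prob E mu y z * stay_prob E mu B n z) UNIV else 0)"

text \<open>P^x(tau(x,r) \<le> n), tau(x,r) = min{n : X_n \<notin> B_d(x,r)}.\<close>
definition exit_prob :: "('a \<Rightarrow> 'a \<Rightarrow> bool) \<Rightarrow> ('a \<Rightarrow> 'a \<Rightarrow> real) \<Rightarrow> ('a \<Rightarrow> 'a \<Rightarrow> real) \<Rightarrow> 'a \<Rightarrow> real \<Rightarrow> nat \<Rightarrow> real" where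
  "exit_prob E mu d x r n = 1 - stay_prob E mu (dball d x r) n x"

end

theory Submission
  imports Defs "HOL-Real_Asymp.Real_Asymp"
begin


lemma has_sum_le_elem:
  fixes f :: "'a \<Rightarrow> real"
  assumes "\<And>x. x \<in> S \<Longrightarrow> f x \<ge> 0" "(f has_sum s) S" "x \<in> S"
  shows "f x \<le> s"
  using finite_sum_le_has_sum[OF assms(2), of "{x}"] assms by auto

lemma swap_has_sum:
  fixes a :: "'a \<Rightarrow> real" and f :: "'a \<Rightarrow> 'b \<Rightarrow> real"
  assumes a0: "\<And>z. a z \<ge> 0" and asum: "a summable_on UNIV"
    and f0: "\<And>z w. f z w \<ge> 0" and fs: "\<And>z. (f z has_sum g z) S" and gb: "\<And>z. g z \<le> Bd"
  shows "((\<lambda>w. infsum (\<lambda>z. a z * f z w) UNIV) has_sum infsum (\<lambda>z. a z * g z) UNIV) S"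
    and "w \<in> S \<Longrightarrow> (\<lambda>z. a z * f z w) summable_on UNIV"
proof -
  have g0: "g z \<ge> 0" for z using has_sum_nonneg[OF fs] f0 by blast
  have ag: "(\<lambda>z. a z * g z) summable_on UNIV"
    apply (rule summable_on_comparison_test[of "\<lambda>z. Bd * a z"])
    using summable_on_cmult_right[OF asum] apply simp
     apply (metis a0 gb mult.commute mult_right_mono)
    using a0 g0 by simp
  define F where "F = (\<lambda>(z,w). a z * f z w)"
  have sl: "((\<lambda>w. F (z,w)) has_sum a z * g z) S" for z
    unfolding F_def using has_sum_cmult_right[OF fs] by simp
  have Fs: "F summable_on Sigma UNIV (\<lambda>_. S)"
    by (rule summable_on_SigmaI[OF sl ag]) (auto simp: F_def a0 f0)
  have Fh: "(F has_sum infsum (\<lambda>z. a z*g z) UNIV) (Sigma UNIV (\<lambda>_. S))"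
    by (rule has_sum_SigmaI[OF sl has_sum_infsum[OF ag] Fs])
  have Fh': "((\<lambda>(w,z). F (z,w)) has_sum infsum (\<lambda>z. a z*g z) UNIV) (S \<times> UNIV)"
    using Fh has_sum_swap by fastforce
  have Fs': "(\<lambda>(w,z). a z * f z w) summable_on Sigma S (\<lambda>_. UNIV)"
    using Fh' unfolding F_def summable_on_def by (auto simp: case_prod_unfold)
  show slw: "w \<in> S \<Longrightarrow> (\<lambda>z. a z * f z w) summable_on UNIV" for w
    using summable_on_SigmaD1[OF Fs'] by blast
  show "((\<lambda>w. infsum (\<lambda>z. a z * f z w) UNIV) has_sum infsum (\<lambda>z. a z * g z) UNIV) S"
    apply (rule has_sum_SigmaD[OF Fh'])
    using slw by (auto simp: F_def)
qed




locale rw =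
  fixes E :: "'a \<Rightarrow> 'a \<Rightarrow> bool" and mu :: "'a \<Rightarrow> 'a \<Rightarrow> real"
  assumes musym: "\<And>x y. mu x y = mu y x" and munn: "\<And>x y. mu x y \<ge> 0"
    and mupos: "\<And>x y. mu x y > 0 \<longleftrightarrow> E x y"
    and fin: "\<And>x. (\<lambda>y. mu x y) summable_on {y. E x y}"
    and vpos: "\<And>x. vmeas E mu x > 0"
begin

abbreviation "M \<equiv> vmeas E mu"
abbreviation "P \<equiv> trans_prob E mu"
abbreviation "p \<equiv> pn E mu"
abbreviation "h \<equiv> hn E mu"

lemma mu_zero: "\<not> E x y \<Longrightarrow> mu x y = 0"
  using munn[of x y] mupos[of x y] by linarith

lemma mu_has_sum: "((\<lambda>y. mu x y) has_sum M x) UNIV"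
proof -
  have "((\<lambda>y. mu x y) has_sum M x) {y. E x y}"
    unfolding vmeas_def using fin by simp
  then show ?thesis
    by (subst has_sum_cong_neutral[where T="{y. E x y}"]) (auto simp: mu_zero)
qed

lemma P_nonneg: "P x y \<ge> 0"
  unfolding trans_prob_def using munn vpos by (simp add: less_imp_le)

lemma P_has_sum: "(P x has_sum 1) UNIV"
proof -
  have "((\<lambda>y. mu x y * (1 / M x)) has_sum (M x * (1 / M x))) UNIV"
    by (rule has_sum_cmult_left[OF mu_has_sum])
  then show ?thesis using vpos[of x] unfolding trans_prob_def by simp
qed

lemma P_summable: "P x summable_on UNIV"
  using P_has_sum summable_on_def by blast

lemma p_props: "(\<forall>y. p n x y \<ge> 0) \<and> (p n x has_sum 1) UNIV"
proof (induction n arbitrary: x)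
  case 0
  have "((\<lambda>y. if x = y then 1 else 0) has_sum (1::real)) UNIV"
    by (subst has_sum_cong_neutral[where T="{x}" and g="\<lambda>_. 1"]) (auto intro: has_sum_finiteI)
  then show ?case by simp
next
  case (Suc n)
  have "((\<lambda>w. infsum (\<lambda>z. P x z * p n z w) UNIV) has_sum infsum (\<lambda>z. P x z * 1) UNIV) UNIV"
    by (rule swap_has_sum(1)[where Bd=1]) (use Suc P_nonneg P_summable in auto)
  moreover have "infsum (\<lambda>z. P x z * 1) UNIV = 1" using infsumI[OF P_has_sum[of x]] by simp
  moreover have "p (Suc n) x y \<ge> 0" for y
    using Suc P_nonneg by (simp add: infsum_nonneg)
  ultimately show ?case by (simp add: pn.simps(2)[abs_def])
qed

lemma p_nonneg: "p n x y \<ge> 0" using p_props by blast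
lemma p_has_sum: "(p n x has_sum 1) UNIV" using p_props by blast
lemma p_summable: "p n x summable_on A"
  using p_has_sum summable_on_def summable_on_subset_banach by (metis top_greatest)
lemma p_le1: "p n x y \<le> 1"
  using has_sum_le_elem[OF _ p_has_sum] p_nonneg by blast

lemma bmult_summable:
  fixes a :: "'b \<Rightarrow> real"
  assumes "a summable_on A" "\<And>z. 0 \<le> a z" "\<And>z. 0 \<le> g z" "\<And>z. g z \<le> 1"
  shows "(\<lambda>z. a z * g z) summable_on A"
  apply (rule summable_on_comparison_test[OF assms(1)])
  using assms by (auto simp: mult_left_le mult_nonneg_nonneg)

lemma bmult_summableK:
  fixes a :: "'b \<Rightarrow> real"
  assumes "a summable_on A" "\<And>z. 0 \<le> a z" "\<And>z. 0 \<le> g z" "\<And>z. g z \<le> K"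
  shows "(\<lambda>z. a z * g z) summable_on A"
  apply (rule summable_on_comparison_test[OF summable_on_cmult_left[OF assms(1), of K]])
  using assms by (auto simp: mult_left_mono mult_nonneg_nonneg)

lemma prod_summable:
  assumes "\<And>z. 0 \<le> g z" "\<And>z. g z \<le> 1"
  shows "(\<lambda>z. p m x z * g z) summable_on A"
  by (rule bmult_summable[OF p_summable p_nonneg assms])

lemma P_prod_summable:
  assumes "\<And>z. 0 \<le> g z" "\<And>z. g z \<le> 1"
  shows "(\<lambda>z. P x z * g z) summable_on A"
  by (rule bmult_summable[OF summable_on_subset_banach[OF P_summable] P_nonneg assms]) auto

lemma p0_sum: "infsum (\<lambda>z. (if x = z then 1 else 0) * f z) UNIV = (f x :: real)"
proof -
  have "infsum (\<lambda>z. (if x = z then 1 else 0) * f z) UNIV = infsum (\<lambda>z. (if x = z then 1 else 0) * f z) {x}"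
    by (rule infsum_cong_neutral) auto
  then show ?thesis by simp
qed

lemma p0_sum': "infsum (\<lambda>z. f z * (if z = y then 1 else 0)) UNIV = (f y :: real)"
  using p0_sum[of y f] by (simp add: mult.commute eq_commute)

lemma CK: "p (m + n) x y = infsum (\<lambda>z. p m x z * p n z y) UNIV"
proof (induction m arbitrary: x)
  case 0
  then show ?case using p0_sum[of x "\<lambda>z. p n z y"] by simp
next
  case (Suc m)
  have "p (Suc m + n) x y = infsum (\<lambda>w. P x w * p (m+n) w y) UNIV" by simp
  also have "\<dots> = infsum (\<lambda>w. P x w * infsum (\<lambda>z. p m w z * p n z y) UNIV) UNIV"
    using Suc by simp
  also have "\<dots> = infsum (\<lambda>z. infsum (\<lambda>w. P x w * (p m w z * p n z y)) UNIV) UNIV"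
  proof (rule sym, rule infsumI, rule swap_has_sum(1)[where Bd=1])
    show "((\<lambda>z. p m w z * p n z y) has_sum infsum (\<lambda>z. p m w z * p n z y) UNIV) UNIV" for w
      using prod_summable[of "\<lambda>z. p n z y"] p_nonneg p_le1 by auto
    show "infsum (\<lambda>z. p m w z * p n z y) UNIV \<le> 1" for w
      using Suc[symmetric] p_le1 by simp
  qed (use P_nonneg P_summable p_nonneg in auto)
  also have "\<dots> = infsum (\<lambda>z. infsum (\<lambda>w. P x w * p m w z) UNIV * p n z y) UNIV"
  proof (rule infsum_cong)
    fix z
    have s: "(\<lambda>w. P x w * p m w z) summable_on UNIV"
      by (rule swap_has_sum(2)[where Bd=1 and g="\<lambda>_. 1" and S=UNIV]) (use P_nonneg P_summable p_nonneg p_has_sum in auto)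
    show "infsum (\<lambda>w. P x w * (p m w z * p n z y)) UNIV = infsum (\<lambda>w. P x w * p m w z) UNIV * p n z y"
      using infsum_cmult_left[OF s, of "p n z y"] by (simp add: mult.assoc)
  qed
  also have "\<dots> = infsum (\<lambda>z. p (Suc m) x z * p n z y) UNIV" by simp
  finally show ?case .
qed

lemma p1: "p (Suc 0) x y = P x y"
  using p0_sum'[of "P x" y] by simp

lemma P_le1: "P x y \<le> 1"
  using p_le1[of "Suc 0" x y] by (simp only: p1)

lemma muP: "M x * P x z = mu x z"
  using vpos[of x] unfolding trans_prob_def by simp

lemma p_sym: "M x * p n x y = M y * p n y x"
proof (induction n arbitrary: x y)
  case 0
  then show ?case by simp
next
  case (Suc n)
  have "M x * p (Suc n) x y = M x * infsum (\<lambda>z. P x z * p n z y) UNIV" by simp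
  also have "\<dots> = infsum (\<lambda>z. M x * P x z * p n z y) UNIV"
    by (subst infsum_cmult_right[symmetric]) (auto simp: mult.assoc intro: P_prod_summable p_nonneg p_le1)
  also have "\<dots> = infsum (\<lambda>z. P z x * (M z * p n z y)) UNIV"
    by (rule infsum_cong) (simp add: muP musym mult.commute mult.left_commute)
  also have "\<dots> = infsum (\<lambda>z. P z x * (M y * p n y z)) UNIV"
    using Suc by simp
  also have "\<dots> = M y * infsum (\<lambda>z. p n y z * P z x) UNIV"
    by (subst infsum_cmult_right[symmetric]) (use prod_summable[of "\<lambda>z. P z x" n y UNIV] P_nonneg P_le1 in \<open>auto simp: mult_ac\<close>)
  also have "\<dots> = M y * p (Suc n) y x"
  proof -
    have "p (n + Suc 0) y x = infsum (\<lambda>z. p n y z * P z x) UNIV"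
      using CK[of n "Suc 0" y x] by (simp only: p1)
    then show ?thesis by simp
  qed
  finally show ?case .
qed

lemma h_nonneg: "h n x y \<ge> 0"
  unfolding hn_def using p_nonneg vpos by (simp add: less_imp_le)

lemma h_sym: "h n x y = h n y x"
  using p_sym[of x n y] vpos[of x] vpos[of y] unfolding hn_def
  by (simp add: field_simps)

lemma h_le: "h n x y \<le> 1 / M y"
  unfolding hn_def using p_le1[of n x y] vpos[of y] by (simp add: divide_right_mono)

lemma h_le': "h n x y \<le> 1 / M x"
  using h_le h_sym by metis

lemma h_split: "h (a + b) x z = infsum (\<lambda>w. p a x w * h b z w) UNIV"
proof -
  have "h (a + b) x z = infsum (\<lambda>w. p a x w * p b w z) UNIV * (1 / M z)"
    unfolding hn_def using CK by simp
  also have "\<dots> = infsum (\<lambda>w. p a x w * p b w z * (1 / M z)) UNIV"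
    by (rule infsum_cmult_left[symmetric]) (use prod_summable p_nonneg p_le1 in auto)
  also have "\<dots> = infsum (\<lambda>w. p a x w * h b z w) UNIV"
    by (rule infsum_cong) (metis h_sym hn_def times_divide_eq_right mult_1_right)
  finally show ?thesis .
qed

lemma ph_summable: "(\<lambda>w. p a x w * h b z w) summable_on A"
  by (rule bmult_summableK[OF p_summable p_nonneg h_nonneg h_le'])

lemma h_amgm: "h (a + b) x z \<le> (h (a + a) x x + h (b + b) z z) / 2"
proof -
  have pw: "p a x w * h b z w \<le> (p a x w * h a x w + p b z w * h b z w) / 2" for w
  proof -
    have e1: "p a x w = M w * h a x w" and e2: "p b z w = M w * h b z w"
      unfolding hn_def using vpos[of w] by auto
    have "h a x w * h b z w \<le> (h a x w * h a x w + h b z w * h b z w) / 2"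
      using sum_squares_ge_zero[of "h a x w - h b z w" 0] by (simp add: algebra_simps power2_eq_square)
    then have "M w * (h a x w * h b z w) \<le> M w * ((h a x w * h a x w + h b z w * h b z w) / 2)"
      using vpos[of w] by (simp add: mult_left_mono)
    then show ?thesis unfolding e1 e2 by (simp add: algebra_simps)
  qed
  have hs0: "((\<lambda>w. p a x w * h b z w) has_sum h (a + b) x z) UNIV"
    using h_split ph_summable has_sum_infsum by metis
  have hs1: "((\<lambda>w. p a x w * h a x w) has_sum h (a + a) x x) UNIV"
    using h_split ph_summable has_sum_infsum by metis
  have hs2: "((\<lambda>w. p b z w * h b z w) has_sum h (b + b) z z) UNIV"
    using h_split ph_summable has_sum_infsum by metis
  have hs3: "((\<lambda>w. (p a x w * h a x w + p b z w * h b z w) / 2) has_sum ((h (a + a) x x + h (b + b) z z) / 2)) UNIV"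
    by (rule has_sum_divide_const[OF has_sum_add[OF hs1 hs2]])
  show ?thesis by (rule has_sum_mono[OF hs0 hs3 pw])
qed

lemma infsum_p_le1: "infsum (p n z) B \<le> 1"
  using infsum_mono_neutral[OF p_summable[of n z B] p_summable[of n z UNIV]] infsumI[OF p_has_sum[of n z]] p_nonneg by auto

lemma stay_bounds: "0 \<le> stay_prob E mu B n y \<and> stay_prob E mu B n y \<le> 1"
proof (induction n arbitrary: y)
  case 0
  then show ?case by simp
next
  case (Suc n)
  have "infsum (\<lambda>z. P y z * stay_prob E mu B n z) UNIV \<le> infsum (\<lambda>z. P y z * 1) UNIV"
    by (rule infsum_mono) (use Suc P_nonneg in \<open>auto intro: P_prod_summable mult_left_le simp: P_summable\<close>)
  also have "\<dots> = 1" using infsumI[OF P_has_sum[of y]] by simp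
  finally show ?case using Suc P_nonneg by (auto intro: infsum_nonneg)
qed

lemma stay_le: "stay_prob E mu B n y \<le> infsum (p n y) B"
proof (induction n arbitrary: y)
  case 0
  show ?case
  proof (cases "y \<in> B")
    case True
    have "infsum (p 0 y) B = infsum (p 0 y) {y}"
      by (rule infsum_cong_neutral) (use True in auto)
    also have "\<dots> = 1" by simp
    finally show ?thesis using True by (simp del: pn.simps)
  next
    case False
    have "infsum (p 0 y) B = 0"
      by (rule infsum_0) (use False in auto)
    then show ?thesis using False by (simp del: pn.simps)
  qed
next
  case (Suc n)
  show ?case
  proof (cases "y \<in> B")
    case False
    then show ?thesis using p_nonneg[of "Suc n" y] by (simp del: pn.simps add: infsum_nonneg)
  next
    case True
    have "stay_prob E mu B (Suc n) y = infsum (\<lambda>z. P y z * stay_prob E mu B n z) UNIV"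
      using True by simp
    also have "\<dots> \<le> infsum (\<lambda>z. P y z * infsum (p n z) B) UNIV"
      apply (rule infsum_mono)
        apply (rule P_prod_summable) using stay_bounds apply auto[2]
       apply (rule P_prod_summable) using p_nonneg p_le1 apply (auto intro: infsum_nonneg)[1]
      subgoal for z by (rule infsum_p_le1)
      using Suc P_nonneg by (simp add: mult_left_mono)
    also have "\<dots> = infsum (\<lambda>w. infsum (\<lambda>z. P y z * p n z w) UNIV) B"
    proof (rule sym, rule infsumI, rule swap_has_sum(1)[where Bd=1])
      show "infsum (p n z) B \<le> 1" for z
        by (rule infsum_p_le1)
    qed (use P_nonneg P_summable p_nonneg p_summable in auto)
    also have "\<dots> = infsum (p (Suc n) y) B" by (rule infsum_cong) simp
    finally show ?thesis .
  qed
qed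

lemma exit_le: "infsum (p n y) (- B) \<le> 1 - stay_prob E mu B n y"
proof -
  have "infsum (p n y) (B \<union> - B) = infsum (p n y) B + infsum (p n y) (- B)"
    by (rule infsum_Un_disjoint) (auto simp: p_summable)
  moreover have "infsum (p n y) (B \<union> - B) = 1" using infsumI[OF p_has_sum[of n y]] by simp
  ultimately show ?thesis using stay_le[of B n y] by linarith
qed

end



lemma asym_small:
  fixes a c g eps :: real assumes "a > 0" "c > 0" "g > 0" "eps > 0"
  shows "\<exists>K>0. \<forall>t\<ge>K. (1+t) powr a * exp(-(c * t powr g)) \<le> eps"
proof -
  have "((\<lambda>t. (1+t) powr a * exp(-(c * t powr g))) \<longlongrightarrow> 0) at_top"
    using assms by real_asymp
  then have "eventually (\<lambda>t. (1+t) powr a * exp(-(c * t powr g)) < eps) at_top"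
    using assms(4) order_tendstoD(2) by blast
  then obtain K where K: "\<forall>t\<ge>K. (1+t) powr a * exp(-(c * t powr g)) < eps"
    unfolding eventually_at_top_linorder by blast
  show ?thesis
    by (rule exI[of _ "max K 1"]) (use K in \<open>auto intro: less_imp_le\<close>)
qed

lemma psi_rewrite:
  fixes t X q b :: real assumes "t \<ge> 0" "X > 0"
  shows "(t powr b / X) powr q = (1 / X powr q) * t powr (b * q)"
  using assms by (simp add: powr_divide powr_powr)

lemma asym_psi:
  fixes a X b q th eps :: real assumes "a > 0" "X > 0" "b > 0" "q > 0" "th > 0" "eps > 0"
  shows "\<exists>K>0. \<forall>t\<ge>K. (1+t) powr a * exp(- (th * (t powr b / X) powr q)) \<le> eps"
proof -
  obtain K where K: "K > 0" "\<forall>t\<ge>K. (1+t) powr a * exp(-((th / X powr q) * t powr (b*q))) \<le> eps"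
    using asym_small[of a "th / X powr q" "b*q" eps] assms by auto
  show ?thesis
  proof (intro exI[of _ K] conjI allI impI)
    fix t assume "t \<ge> K"
    moreover have "t \<ge> 0" using K \<open>t \<ge> K\<close> by linarith
    ultimately show "(1+t) powr a * exp(- (th * (t powr b / X) powr q)) \<le> eps"
      using K psi_rewrite[of t X b q] assms by (simp add: mult.assoc)
  qed (use K in auto)
qed

lemma bdd_psi:
  fixes a X b q th :: real assumes "a > 0" "X > 0" "b > 0" "q > 0" "th > 0"
  shows "\<exists>L>0. \<forall>t\<ge>0. (1+t) powr a * exp(- (th * (t powr b / X) powr q)) \<le> L"
proof -
  obtain K where K: "K > 0" "\<forall>t\<ge>K. (1+t) powr a * exp(- (th * (t powr b / X) powr q)) \<le> 1"
    using asym_psi[of a X b q th 1] assms by auto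
  show ?thesis
  proof (intro exI[of _ "max 1 ((1+K) powr a)"] conjI allI impI)
    fix t :: real assume t: "t \<ge> 0"
    show "(1+t) powr a * exp(- (th * (t powr b / X) powr q)) \<le> max 1 ((1+K) powr a)"
    proof (cases "t \<ge> K")
      case True then show ?thesis using K by force
    next
      case False
      have e: "exp(- (th * (t powr b / X) powr q)) \<le> 1"
        using assms t by simp
      have "(1+t) powr a \<le> (1+K) powr a"
        using False t assms by (intro powr_mono2) auto
      then have "(1+t) powr a * exp(- (th * (t powr b / X) powr q)) \<le> (1+K) powr a * 1"
        by (intro mult_mono e) auto
      then show ?thesis by simp
    qed
  qed auto
qed




context rw begin

lemma split_bound:
  assumes Hz: "\<And>w. h m' z w \<le> Hz" and Hx: "\<And>w. h m x w \<le> Hx"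
  shows "h (m + m') x z \<le> Hz * infsum (p m x) A + Hx * infsum (p m' z) (- A)"
proof -
  have Hz0: "Hz \<ge> 0" using Hz h_nonneg order_trans by blast
  have Hx0: "Hx \<ge> 0" using Hx h_nonneg order_trans by blast
  have "h (m + m') x z = infsum (\<lambda>w. p m x w * h m' z w) (A \<union> - A)"
    using h_split by simp
  also have "\<dots> = infsum (\<lambda>w. p m x w * h m' z w) A + infsum (\<lambda>w. p m x w * h m' z w) (- A)"
    by (rule infsum_Un_disjoint) (auto intro: ph_summable)
  also have "infsum (\<lambda>w. p m x w * h m' z w) A \<le> infsum (\<lambda>w. Hz * p m x w) A"
    apply (rule infsum_mono[OF ph_summable summable_on_cmult_right[OF p_summable]])
    using mult_left_mono[OF Hz p_nonneg] by (simp add: mult.commute)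
  also have "\<dots> = Hz * infsum (p m x) A"
    by (rule infsum_cmult_right) (rule p_summable)
  also have "infsum (\<lambda>w. p m x w * h m' z w) (- A) \<le> infsum (\<lambda>w. Hx * p m' z w) (- A)"
  proof (rule infsum_mono)
    fix w
    have "p m x w * h m' z w = h m x w * p m' z w"
      unfolding hn_def using vpos[of w] by simp
    also have "\<dots> \<le> Hx * p m' z w" by (rule mult_right_mono[OF Hx p_nonneg])
    finally show "p m x w * h m' z w \<le> Hx * p m' z w" .
  qed (auto intro: ph_summable summable_on_cmult_right p_summable)
  also have "\<dots> = Hx * infsum (p m' z) (- A)"
    by (rule infsum_cmult_right) (rule p_summable)
  finally show ?thesis by simp
qed

end

locale hk = rw +
  fixes d :: "'a \<Rightarrow> 'a \<Rightarrow> real" and \<alpha> \<beta> CD CV CP Cp r0 :: real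
  assumes metric: "is_metric d" and fin_vol: "\<And>x r. M summable_on dball d x r"
    and alpha: "\<alpha> > 0" and beta: "\<beta> > 1"
    and CD: "CD > 0" and DUHK: "\<And>x n. h n x x \<le> CD / vol E mu d x (real n powr (1/\<beta>))"
    and CV: "CV \<ge> 1" and VD: "\<And>x r s. 0 < s \<Longrightarrow> s \<le> r \<Longrightarrow> vol E mu d x r \<le> CV * (r/s) powr \<alpha> * vol E mu d x s"
    and CP: "CP > 0" and Psi: "\<And>n x r. n \<ge> 1 \<Longrightarrow> r > 0 \<Longrightarrow>
               exit_prob E mu d x r n \<le> CP * exp (- ((r powr \<beta> / (CP * real n)) powr (1 / (\<beta> - 1))))"
    and Cp: "Cp > 0" and NdU: "\<And>x y. E x y \<Longrightarrow> d x y \<le> Cp"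
    and r0: "r0 > 0" and dL: "\<And>x y. x \<noteq> y \<Longrightarrow> d x y \<ge> r0"
begin

abbreviation "V \<equiv> vol E mu d"
abbreviation "rn n \<equiv> real n powr (1/\<beta>)"

lemma d0: "d x x = 0" and dnn: "d x y \<ge> 0" and dsym: "d x y = d y x" and dtri: "d x z \<le> d x y + d y z"
  using metric unfolding is_metric_def by auto

lemma M_nonneg: "M x \<ge> 0" using vpos less_imp_le by blast

lemma V_mono: "r \<le> s \<Longrightarrow> V x r \<le> V x s"
  unfolding vol_def
  by (rule infsum_mono_neutral[OF fin_vol fin_vol]) (auto simp: dball_def M_nonneg)

lemma M_le_V: "r \<ge> 0 \<Longrightarrow> M x \<le> V x r"
  unfolding vol_def
  by (rule has_sum_le_elem[OF _ has_sum_infsum[OF fin_vol]]) (auto simp: M_nonneg dball_def d0)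

lemma V_pos: "r \<ge> 0 \<Longrightarrow> V x r > 0"
  using M_le_V vpos by (meson less_le_trans)

lemma V_small: "0 \<le> r \<Longrightarrow> r < r0 \<Longrightarrow> V x r = M x"
proof -
  assume "0 \<le> r" "r < r0"
  then have "dball d x r = {x}" unfolding dball_def
  proof (intro set_eqI iffI)
    fix y assume "0 \<le> r" "r < r0" "y \<in> {y. d x y \<le> r}"
    then show "y \<in> {x}" using dL[of x y] by force
  qed (use d0 in auto)
  then show ?thesis unfolding vol_def by simp
qed

lemma V_shift: "V x r \<le> V z (r + d x z)"
  unfolding vol_def
  by (rule infsum_mono_neutral[OF fin_vol fin_vol])
     (auto simp: dball_def M_nonneg, metis add_le_cancel_left dsym dtri order_trans add.commute)

lemma rn_pos: "n \<ge> 1 \<Longrightarrow> rn n > 0" by simp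

lemma rn_pow: "rn n powr \<beta> = real n"
  using beta by (simp add: powr_powr)

lemma rn_ratio: "1 \<le> m \<Longrightarrow> m \<le> n \<Longrightarrow> rn n / rn m \<le> real n / real m"
proof -
  assume mn: "1 \<le> m" "m \<le> n"
  have "rn n / rn m = (real n / real m) powr (1/\<beta>)"
    using mn by (simp add: powr_divide)
  also have "\<dots> \<le> (real n / real m) powr 1"
    using mn beta by (intro powr_mono) auto
  finally show ?thesis using mn by simp
qed

lemma VD_rn: "1 \<le> m \<Longrightarrow> m \<le> n \<Longrightarrow> real n / real m \<le> c \<Longrightarrow> V x (rn n) \<le> CV * c powr \<alpha> * V x (rn m)"
proof -
  assume mn: "1 \<le> m" "m \<le> n" "real n / real m \<le> c"
  have "V x (rn n) \<le> CV * (rn n / rn m) powr \<alpha> * V x (rn m)"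
    using mn beta by (intro VD) (auto intro!: powr_mono2)
  also have "(rn n / rn m) powr \<alpha> \<le> c powr \<alpha>"
    using rn_ratio[OF mn(1,2)] mn alpha by (intro powr_mono2) auto
  finally show ?thesis using CV V_pos[of "rn m" x] by (simp add: mult_right_mono)
qed

lemma exit_tail:
  assumes "1 \<le> k" "k \<le> n" "r > 0"
  shows "infsum (p k y) (- dball d y r) \<le> CP * exp (- ((r powr \<beta> / (CP * real n)) powr (1 / (\<beta> - 1))))"
proof -
  have "infsum (p k y) (- dball d y r) \<le> exit_prob E mu d y r k"
    unfolding exit_prob_def by (rule exit_le)
  also have "\<dots> \<le> CP * exp (- ((r powr \<beta> / (CP * real k)) powr (1 / (\<beta> - 1))))"
    using Psi assms by simp
  also have "\<dots> \<le> CP * exp (- ((r powr \<beta> / (CP * real n)) powr (1 / (\<beta> - 1))))"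
  proof -
    have "r powr \<beta> / (CP * real n) \<le> r powr \<beta> / (CP * real k)"
      using assms CP by (intro divide_left_mono) auto
    then have "(r powr \<beta> / (CP * real n)) powr (1 / (\<beta> - 1)) \<le> (r powr \<beta> / (CP * real k)) powr (1 / (\<beta> - 1))"
      using beta assms CP by (intro powr_mono2) auto
    then show ?thesis using CP by simp
  qed
  finally show ?thesis .
qed

end



context hk begin

definition "s0 = min (1/2) (r0/2)"
definition "X = 3 powr \<beta> * CP"
definition "q = 1 / (\<beta> - 1)"
definition "Gf t = (1+t) powr \<alpha> * exp(-((t powr \<beta> / X) powr q))"

lemma s0: "0 < s0" "s0 < r0" "s0 \<le> 1/2" "2 \<le> 1/s0"
  using r0 unfolding s0_def by (auto simp: min_def field_simps)

lemma rn_mono: "m \<le> n \<Longrightarrow> rn m \<le> rn n"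
  using beta by (intro powr_mono2) auto

lemma h_le_div: "h m x w * V x (rn m) \<le> B \<Longrightarrow> h m x w \<le> B / V x (rn m)"
  using V_pos[of "rn m" x] by (simp add: pos_le_divide_eq)

lemma near:
  assumes n: "n \<ge> 1" and K: "K > 0" and dxz: "d x z \<le> K * rn n"
  shows "h n x z * V x (rn n) \<le> CD * (CV * (1/s0) powr \<alpha> + CV * (1+K) powr \<alpha>) / 2"
proof -
  define a where "a = n div 2"
  define b where "b = n - a"
  have ab: "a + b = n" "b \<ge> 1" "n \<le> b + b" unfolding a_def b_def using n by auto
  have Vn: "V x (rn n) > 0" by (rule V_pos) simp
  have Vxa: "V x (rn (a+a)) > 0" by (rule V_pos) simp
  have Vzb: "V z (rn (b+b)) > 0" by (rule V_pos) simp
  have am: "h n x z \<le> (h (a + a) x x + h (b + b) z z) / 2"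
    using h_amgm[of a b x z] ab by simp
  have d1: "h (a + a) x x \<le> CD / V x (rn (a+a))" by (rule DUHK)
  have d2: "h (b + b) z z \<le> CD / V z (rn (b+b))" by (rule DUHK)
  have V1: "V x (rn n) \<le> CV * (1/s0) powr \<alpha> * V x (rn (a+a))"
  proof (cases "a = 0")
    case True
    then have n1: "n = 1" using ab unfolding a_def by auto
    have "V x (rn n) = V x 1" using n1 by simp
    also have "\<dots> \<le> CV * (1/s0) powr \<alpha> * V x s0"
      using VD[of s0 1 x] s0 by simp
    also have "V x s0 = V x (rn (a+a))"
      using V_small[of s0 x] V_small[of 0 x] s0 r0 True by simp
    finally show ?thesis .
  next
    case False
    have "real n / real (a + a) \<le> 1/s0"
    proof -
      have "n \<le> 2 * (a + a)" using False unfolding a_def by presburger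
      then have "real n \<le> 2 * real (a + a)" by (metis of_nat_le_iff of_nat_mult of_nat_numeral)
      then have "real n / real (a + a) \<le> 2" using False by (simp add: divide_le_eq)
      then show ?thesis using s0 by linarith
    qed
    then show ?thesis using VD_rn[of "a+a" n "1/s0" x] False unfolding a_def by simp
  qed
  have V2: "V x (rn n) \<le> CV * (1+K) powr \<alpha> * V z (rn (b+b))"
  proof -
    have rp: "rn n > 0" using n by simp
    have "V x (rn n) \<le> V z (rn n + d x z)" by (rule V_shift)
    also have "\<dots> \<le> V z ((1+K) * rn n)"
      using dxz by (intro V_mono) (simp add: algebra_simps)
    also have "\<dots> \<le> CV * ((1+K) * rn n / rn n) powr \<alpha> * V z (rn n)"
      using rp K by (intro VD) auto
    also have "\<dots> = CV * (1+K) powr \<alpha> * V z (rn n)" using rp by simp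
    also have "\<dots> \<le> CV * (1+K) powr \<alpha> * V z (rn (b+b))"
      using ab CV by (intro mult_left_mono V_mono rn_mono) auto
    finally show ?thesis .
  qed
  have "h n x z * V x (rn n) \<le> (CD / V x (rn (a+a)) + CD / V z (rn (b+b))) / 2 * V x (rn n)"
    using am d1 d2 Vn by (intro mult_right_mono) auto
  also have "\<dots> = (CD * (V x (rn n) / V x (rn (a+a))) + CD * (V x (rn n) / V z (rn (b+b)))) / 2"
    by (simp add: field_simps)
  also have "\<dots> \<le> (CD * (CV * (1/s0) powr \<alpha>) + CD * (CV * (1+K) powr \<alpha>)) / 2"
    using V1 V2 Vxa Vzb CD by (intro divide_right_mono add_mono mult_left_mono) (auto simp: divide_le_eq)
  finally show ?thesis by (simp add: algebra_simps)
qed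

end



context hk begin

lemma key_exp:
  assumes "n \<ge> 1" "R \<ge> 0"
  shows "(R/3) powr \<beta> / (CP * real n) = (R / rn n) powr \<beta> / X"
proof -
  have rp: "rn n > 0" using assms by simp
  have "(R / rn n) powr \<beta> = R powr \<beta> / real n"
    using assms rp by (simp add: powr_divide rn_pow)
  moreover have "(R/3) powr \<beta> = R powr \<beta> / 3 powr \<beta>"
    using assms by (simp add: powr_divide)
  ultimately show ?thesis unfolding X_def using CP assms by (simp add: field_simps)
qed

lemma far:
  assumes n: "n \<ge> 2" and B: "B \<ge> 0"
    and IHx: "\<And>w. h (n div 2) x w * V x (rn (n div 2)) \<le> B"
    and IHz: "\<And>w. h (n - n div 2) z w * V z (rn (n - n div 2)) \<le> B"
    and R: "d x z > 0"
  shows "h n x z * V x (rn n) \<le> B * (2 * CV * 3 powr \<alpha> * CP * Gf (d x z / rn n))"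
proof -
  define m where "m = n div 2"
  define m' where "m' = n - m"
  define R where "R = d x z"
  define t where "t = R / rn n"
  define e where "e = exp(-((t powr \<beta> / X) powr q))"
  have mm: "1 \<le> m" "1 \<le> m'" "m \<le> n" "m' \<le> n" "m + m' = n" "n \<le> 3 * m" "n \<le> 2 * m'"
    unfolding m_def m'_def using n by auto
  have rp: "rn n > 0" using n by simp
  have t0: "t \<ge> 0" unfolding t_def R_def using R rp by simp
  have Rt: "R = t * rn n" unfolding t_def using rp by simp
  have Vn: "V x (rn n) > 0" by (rule V_pos) simp
  have Vxm: "V x (rn m) > 0" by (rule V_pos) simp
  have Vzm: "V z (rn m') > 0" by (rule V_pos) simp
  define Hx where "Hx = B / V x (rn m)"
  define Hz where "Hz = B / V z (rn m')"
  have Hx0: "Hx \<ge> 0" unfolding Hx_def using B Vxm by simp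
  have Hz0: "Hz \<ge> 0" unfolding Hz_def using B Vzm by simp
  have sp: "h n x z \<le> Hz * infsum (p m x) (- dball d x (R/3)) + Hx * infsum (p m' z) (- (- dball d x (R/3)))"
  proof -
    have hz: "h m' z w \<le> Hz" for w unfolding Hz_def m'_def m_def by (rule h_le_div[OF IHz])
    have hx: "h m x w \<le> Hx" for w unfolding Hx_def m_def by (rule h_le_div[OF IHx])
    show ?thesis using split_bound[OF hz hx, of "- dball d x (R/3)"] unfolding mm(5) .
  qed
  have ex: "CP * exp (- (((R/3) powr \<beta> / (CP * real n)) powr (1 / (\<beta> - 1)))) = CP * e"
    unfolding e_def q_def t_def using key_exp[of n R] mm R R_def by simp
  have T1: "infsum (p m x) (- dball d x (R/3)) \<le> CP * e"
    using exit_tail[of m n "R/3" x] mm R ex unfolding R_def by simp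
  have T2: "infsum (p m' z) (- (- dball d x (R/3))) \<le> CP * e"
  proof -
    have "infsum (p m' z) (- (- dball d x (R/3))) \<le> infsum (p m' z) (- dball d z (R/3))"
    proof (rule infsum_mono_neutral[OF p_summable p_summable])
      fix w assume "w \<in> - (- dball d x (R / 3)) - - dball d z (R / 3)"
      then have "d x w \<le> R/3" "d z w \<le> R/3" unfolding dball_def by auto
      moreover have "R \<le> d x w + d w z" unfolding R_def by (rule dtri)
      ultimately show "p m' z w \<le> 0" using R unfolding R_def by (simp add: dsym[of w z])
    qed (auto simp: p_nonneg)
    also have "\<dots> \<le> CP * e"
      using exit_tail[of m' n "R/3" z] mm R ex unfolding R_def by simp
    finally show ?thesis .
  qed
  have e0: "e \<ge> 0" unfolding e_def by simp
  have hb: "h n x z \<le> (Hz + Hx) * (CP * e)"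
    using sp mult_left_mono[OF T1 Hz0] mult_left_mono[OF T2 Hx0] by (simp add: algebra_simps)
  have pa: "(1 + t) powr \<alpha> \<ge> 1" using t0 alpha by (simp add: ge_one_powr_ge_zero)
  have VHx: "V x (rn n) * Hx \<le> B * (CV * 3 powr \<alpha> * (1 + t) powr \<alpha>)"
  proof -
    have "V x (rn n) \<le> CV * 3 powr \<alpha> * V x (rn m)"
      using VD_rn[of m n 3 x] mm by (simp add: divide_le_eq)
    then have "V x (rn n) / V x (rn m) \<le> CV * 3 powr \<alpha>" using Vxm by (simp add: divide_le_eq)
    also have "\<dots> \<le> CV * 3 powr \<alpha> * (1 + t) powr \<alpha>" using pa CV by simp
    finally show ?thesis unfolding Hx_def using B
      by (metis mult.commute mult_left_mono times_divide_eq_right)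
  qed
  have VHz: "V x (rn n) * Hz \<le> B * (CV * 3 powr \<alpha> * (1 + t) powr \<alpha>)"
  proof -
    have rm': "rn m' > 0" using mm by simp
    have rle: "rn m' \<le> rn n + R" using rn_mono[OF mm(4)] R R_def by simp
    have rnn: "0 \<le> (rn n + R) / rn m'" using rm' rle
      by (metis divide_nonneg_pos less_le_trans less_imp_le)
    have ratio: "(rn n + R) / rn m' \<le> 3 * (1 + t)"
    proof -
      have "rn n / rn m' \<le> real n / real m'" using rn_ratio[OF mm(2,4)] .
      also have "\<dots> \<le> 2" using mm by (simp add: divide_le_eq)
      finally have r2: "rn n / rn m' \<le> 2" .
      have "(rn n + R) / rn m' = (1 + t) * (rn n / rn m')" using Rt rm' by (simp add: field_simps)
      also have "\<dots> \<le> (1 + t) * 2" using r2 t0 by (intro mult_left_mono) auto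
      also have "\<dots> \<le> 3 * (1 + t)" using t0 by simp
      finally show ?thesis .
    qed
    have "V x (rn n) \<le> V z (rn n + R)" unfolding R_def by (rule V_shift)
    also have "\<dots> \<le> CV * ((rn n + R) / rn m') powr \<alpha> * V z (rn m')"
      using rm' rle by (intro VD) auto
    also have "\<dots> \<le> CV * (3 * (1 + t)) powr \<alpha> * V z (rn m')"
      using ratio rm' rle alpha CV Vzm rnn by (intro mult_right_mono mult_left_mono powr_mono2) auto
    also have "(3 * (1 + t)) powr \<alpha> = 3 powr \<alpha> * (1 + t) powr \<alpha>"
      using t0 powr_mult[of 3 "1+t" \<alpha>] by simp
    finally have "V x (rn n) / V z (rn m') \<le> CV * 3 powr \<alpha> * (1 + t) powr \<alpha>"
      using Vzm by (simp add: divide_le_eq mult.assoc)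
    then show ?thesis unfolding Hz_def using B
      by (metis mult.commute mult_left_mono times_divide_eq_right)
  qed
  have "h n x z * V x (rn n) \<le> (Hz + Hx) * (CP * e) * V x (rn n)"
    using hb Vn by (intro mult_right_mono) auto
  also have "\<dots> = (V x (rn n) * Hz + V x (rn n) * Hx) * (CP * e)" by (simp add: algebra_simps)
  also have "\<dots> \<le> (B * (CV * 3 powr \<alpha> * (1 + t) powr \<alpha>) + B * (CV * 3 powr \<alpha> * (1 + t) powr \<alpha>)) * (CP * e)"
    using VHx VHz CP e0 by (intro mult_right_mono add_mono) auto
  also have "\<dots> = B * (2 * CV * 3 powr \<alpha> * CP * Gf t)"
    unfolding Gf_def e_def by (simp add: algebra_simps)
  finally show ?thesis unfolding t_def R_def .
qed

end



context hk begin

definition "Bn K = CD * (CV * (1/s0) powr \<alpha> + CV * (1+K) powr \<alpha>) / 2"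

lemma Bn_nonneg: "K > 0 \<Longrightarrow> Bn K \<ge> 0"
  unfolding Bn_def using CD CV by simp

lemma h1_zero: "\<not> E x z \<Longrightarrow> h (Suc 0) x z = 0"
  unfolding hn_def using p1[of x z] mu_zero[of x z] by (simp add: trans_prob_def)

lemma uniform:
  assumes K: "K \<ge> Cp" "K > 0" "\<forall>t \<ge> K. 2 * CV * 3 powr \<alpha> * CP * Gf t \<le> 1"
  shows "n \<ge> 1 \<Longrightarrow> h n x z * V x (rn n) \<le> Bn K"
proof (induction n arbitrary: x z rule: less_induct)
  case (less n)
  show ?case
  proof (cases "d x z \<le> K * rn n")
    case True
    show ?thesis using near[OF less.prems K(2) True] unfolding Bn_def .
  next
    case False
    show ?thesis
    proof (cases "n = 1")
      case True
      then have "d x z > Cp" using False K by simp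
      then have "\<not> E x z" using NdU by force
      then show ?thesis using True h1_zero Bn_nonneg K by simp
    next
      case n1: False
      then have n2: "n \<ge> 2" using less.prems by simp
      have IHx: "h (n div 2) x w * V x (rn (n div 2)) \<le> Bn K" for w
        using less.IH[of "n div 2" x w] n2 by simp
      have IHz: "h (n - n div 2) z w * V z (rn (n - n div 2)) \<le> Bn K" for w
        using less.IH[of "n - n div 2" z w] n2 by simp
      have rp: "rn n > 0" using n2 by simp
      have R: "d x z > 0" using False K rp by (smt (verit) mult_pos_pos)
      have tK: "d x z / rn n \<ge> K" using False rp by (simp add: le_divide_eq)
      have "h n x z * V x (rn n) \<le> Bn K * (2 * CV * 3 powr \<alpha> * CP * Gf (d x z / rn n))"
        by (rule far[OF n2 Bn_nonneg[OF K(2)] IHx IHz R])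
      also have "\<dots> \<le> Bn K * 1"
        using K(3) tK Bn_nonneg[OF K(2)] by (intro mult_left_mono) auto
      finally show ?thesis by simp
    qed
  qed
qed

end



context hk begin

lemma X_pos: "X > 0" unfolding X_def using CP by simp
lemma q_pos: "q > 0" unfolding q_def using beta by simp

lemma half_psi:
  assumes t: "t \<ge> 0" and c: "c \<ge> 2 powr (\<beta> - 1) * X"
  shows "(t powr \<beta> / c) powr q \<le> (1/2) * (t powr \<beta> / X) powr q"
proof -
  have p2: "2 powr (\<beta> - 1) > 0" by simp
  have c0: "c > 0" using c X_pos p2 by (smt (verit) mult_pos_pos)
  have "t powr \<beta> / c \<le> t powr \<beta> / (2 powr (\<beta> - 1) * X)"
    using c X_pos p2 c0 by (intro divide_left_mono) auto
  then have "(t powr \<beta> / c) powr q \<le> (t powr \<beta> / (2 powr (\<beta> - 1) * X)) powr q"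
    using q_pos c X_pos p2 c0 by (intro powr_mono2) (auto simp: less_imp_le)
  also have "(t powr \<beta> / (2 powr (\<beta> - 1) * X)) = (t powr \<beta> / X) / 2 powr (\<beta> - 1)"
    by (simp add: field_simps)
  also have "((t powr \<beta> / X) / 2 powr (\<beta> - 1)) powr q = (t powr \<beta> / X) powr q / (2 powr (\<beta> - 1)) powr q"
    using X_pos powr_divide[of "t powr \<beta> / X" "2 powr (\<beta> - 1)" q] by simp
  also have "(2 powr (\<beta> - 1)) powr q = 2"
    unfolding q_def using beta by (simp add: powr_powr)
  finally show ?thesis by simp
qed

lemma final:
  "\<exists>c1>0. \<forall>x y n. h n x y \<le> c1 / V x (rn n) * exp (- ((d x y powr \<beta> / (c1 * real n)) powr (1 / (\<beta> - 1))))"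
proof -
  define A where "A = 2 * CV * 3 powr \<alpha> * CP"
  have A0: "A > 0" unfolding A_def using CV CP by simp
  obtain K0 where K0: "K0 > 0" "\<forall>t\<ge>K0. (1+t) powr \<alpha> * exp(- (1 * (t powr \<beta> / X) powr q)) \<le> 1 / A"
    using asym_psi[of \<alpha> X \<beta> q 1 "1/A"] alpha X_pos beta q_pos A0 by auto
  define K where "K = max K0 Cp"
  have K: "K \<ge> Cp" "K > 0" "\<forall>t \<ge> K. 2 * CV * 3 powr \<alpha> * CP * Gf t \<le> 1"
  proof -
    show "K \<ge> Cp" "K > 0" unfolding K_def using K0 by auto
    show "\<forall>t \<ge> K. 2 * CV * 3 powr \<alpha> * CP * Gf t \<le> 1"
    proof (intro allI impI)
      fix t assume "t \<ge> K"
      then have "Gf t \<le> 1 / A" using K0 unfolding K_def Gf_def by auto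
      then have "A * Gf t \<le> A * (1 / A)" using A0 by (intro mult_left_mono) auto
      then show "2 * CV * 3 powr \<alpha> * CP * Gf t \<le> 1" using A0 CV CP unfolding A_def by simp
    qed
  qed
  define B where "B = Bn K"
  have B0: "B \<ge> 0" unfolding B_def using Bn_nonneg K by simp
  have unif: "\<And>n x z. n \<ge> 1 \<Longrightarrow> h n x z * V x (rn n) \<le> B"
    unfolding B_def by (rule uniform[OF K])
  obtain L where L: "L > 0" "\<forall>t\<ge>0. (1+t) powr \<alpha> * exp(- ((1/2) * (t powr \<beta> / X) powr q)) \<le> L"
    using bdd_psi[of \<alpha> X \<beta> q "1/2"] alpha X_pos beta q_pos by auto
  define cin where "cin = max (2 powr (\<beta> - 1) * X) (max (Cp powr \<beta>) 1)"
  define c1 where "c1 = max cin (max (3 * B) (B * A * L))"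
  have cin1: "cin \<ge> 1" unfolding cin_def by simp
  have c1cin: "c1 \<ge> cin" unfolding c1_def by simp
  have c1pos: "c1 > 0" using cin1 c1cin by simp
  have c1B: "c1 \<ge> 3 * B" "c1 \<ge> B * A * L" unfolding c1_def by auto
  show ?thesis
  proof (intro exI[of _ c1] conjI allI)
    show "c1 > 0" by (rule c1pos)
    fix x y n
    show "h n x y \<le> c1 / V x (rn n) * exp (- ((d x y powr \<beta> / (c1 * real n)) powr (1 / (\<beta> - 1))))"
    proof (cases "n = 0")
      case True
      have "h n x y \<le> 1 / M x"
        using True vpos[of x] unfolding hn_def by auto
      also have "\<dots> \<le> c1 / M x" using cin1 c1cin vpos[of x] by (simp add: divide_right_mono)
      also have "M x = V x (rn n)" using True V_small[of 0 x] r0 by simp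
      finally show ?thesis using True by simp
    next
      case False
      then have n1: "n \<ge> 1" by simp
      have rp: "rn n > 0" using n1 by simp
      have Vp: "V x (rn n) > 0" by (rule V_pos) simp
      define t where "t = d x y / rn n"
      have t0: "t \<ge> 0" unfolding t_def using dnn rp by simp
      define E1 where "E1 = exp (- ((t powr \<beta> / c1) powr q))"
      have dt: "d x y powr \<beta> / (c1 * real n) = t powr \<beta> / c1"
      proof -
        have "t powr \<beta> = d x y powr \<beta> / real n"
          unfolding t_def using dnn[of x y] rp by (simp add: powr_divide rn_pow)
        then show ?thesis by simp
      qed
      have E1eq: "exp (- ((d x y powr \<beta> / (c1 * real n)) powr (1 / (\<beta> - 1)))) = E1"
        unfolding E1_def dt q_def ..
      have mon: "exp (- ((t powr \<beta> / cin) powr q)) \<le> E1"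
      proof -
        have "t powr \<beta> / c1 \<le> t powr \<beta> / cin"
          using c1cin cin1 by (intro divide_left_mono) auto
        then have "(t powr \<beta> / c1) powr q \<le> (t powr \<beta> / cin) powr q"
          using q_pos c1pos by (intro powr_mono2) auto
        then show ?thesis unfolding E1_def by simp
      qed
      have main: "h n x y * V x (rn n) \<le> c1 * E1"
      proof (cases "d x y = 0")
        case True
        then have "E1 = 1" unfolding E1_def t_def using beta q_pos by simp
        then show ?thesis using unif[OF n1, of x y] c1B B0 by simp
      next
        case dpos: False
        then have dpos: "d x y > 0" using dnn[of x y] by simp
        show ?thesis
        proof (cases "n = 1")
          case True
          show ?thesis
          proof (cases "E x y")
            case False
            then show ?thesis using True h1_zero c1pos unfolding E1_def by simp
          next
            case edge: True
            have tle: "t \<le> Cp" unfolding t_def using True NdU[OF edge] by simp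
            have "t powr \<beta> \<le> Cp powr \<beta>" using tle t0 beta by (intro powr_mono2) auto
            also have "\<dots> \<le> cin" unfolding cin_def by simp
            finally have "t powr \<beta> / cin \<le> 1" using cin1 by simp
            then have "(t powr \<beta> / cin) powr q \<le> 1"
              using powr_mono2[of q "t powr \<beta> / cin" 1] q_pos cin1 by simp
            then have "exp (-1) \<le> exp (- ((t powr \<beta> / cin) powr q))" by simp
            moreover have "exp (-1::real) \<ge> 1/3"
              using exp_le by (simp add: exp_minus field_simps)
            ultimately have "E1 \<ge> 1/3" using mon by linarith
            then have "c1 * (1/3) \<le> c1 * E1" using c1pos by (intro mult_left_mono) auto
            then have "B \<le> c1 * E1" using c1B by linarith
            then show ?thesis using unif[OF n1, of x y] by linarith
          qed
        next
          case False
          then have n2: "n \<ge> 2" using n1 by simp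
          have IHx: "h (n div 2) x w * V x (rn (n div 2)) \<le> B" for w
            using unif[of "n div 2"] n2 by simp
          have IHz: "h (n - n div 2) y w * V y (rn (n - n div 2)) \<le> B" for w
            using unif[of "n - n div 2"] n2 by simp
          have hv: "h n x y * V x (rn n) \<le> B * (A * Gf t)"
            using far[OF n2 B0 IHx IHz dpos] unfolding A_def t_def by simp
          have "Gf t \<le> L * exp (- ((1/2) * (t powr \<beta> / X) powr q))"
          proof -
            define ps where "ps = (t powr \<beta> / X) powr q"
            have "Gf t = ((1+t) powr \<alpha> * exp (- ((1/2) * ps))) * exp (- ((1/2) * ps))"
              unfolding Gf_def ps_def by (simp add: mult.assoc exp_add[symmetric])
            also have "\<dots> \<le> L * exp (- ((1/2) * ps))"
              using L t0 unfolding ps_def by (intro mult_right_mono) auto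
            finally show ?thesis unfolding ps_def .
          qed
          also have "exp (- ((1/2) * (t powr \<beta> / X) powr q)) \<le> exp (- ((t powr \<beta> / cin) powr q))"
            using half_psi[OF t0, of cin] unfolding cin_def by simp
          also have "\<dots> \<le> E1" by (rule mon)
          finally have g1: "Gf t \<le> L * E1" using L by simp
          have "B * (A * Gf t) \<le> B * (A * (L * E1))"
            using g1 B0 A0 by (intro mult_left_mono) auto
          with hv have "h n x y * V x (rn n) \<le> B * (A * (L * E1))" by linarith
          also have "\<dots> = (B * A * L) * E1" by (simp add: algebra_simps)
          also have "\<dots> \<le> c1 * E1" using c1B unfolding E1_def by (intro mult_right_mono) auto
          finally show ?thesis .
        qed
      qed
      show ?thesis unfolding E1eq using main Vp by (simp add: pos_divide_le_eq mult.commute le_divide_eq)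
    qed
  qed
qed

end

theorem proposition6p4:
  fixes E :: "'a::countable \<Rightarrow> 'a \<Rightarrow> bool"
    and mu :: "'a \<Rightarrow> 'a \<Rightarrow> real"
    and d :: "'a \<Rightarrow> 'a \<Rightarrow> real"
    and \<alpha> \<beta> :: real
  assumes graph: "simple_connected_graph E"
    and cond: "conductance E mu"
    and fin_mu: "\<forall>x. (\<lambda>y. mu x y) summable_on {y. E x y}"
    and fin_vol: "\<forall>x r. vmeas E mu summable_on dball d x r"
    and metric: "is_metric d"
    and alpha: "\<alpha> > 0" and beta: "\<beta> > 1"
    and DUHK: "\<exists>C>0. \<forall>x n. hn E mu n x x \<le> C / vol E mu d x (real n powr (1 / \<beta>))"
    and VG: "\<exists>C>0. \<forall>x r s. 0 < s \<and> s < r \<longrightarrow> vol E mu d x r \<le> C * (r / s) powr \<alpha> * vol E mu d x s"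
    and Psi: "\<exists>C>0. \<forall>n x r. n \<ge> 1 \<and> r > 0 \<longrightarrow>
               exit_prob E mu d x r n \<le> C * exp (- ((r powr \<beta> / (C * real n)) powr (1 / (\<beta> - 1))))"
    and NdU: "\<exists>Cp. \<forall>x y. E x y \<longrightarrow> d x y \<le> Cp"
    and dL: "\<exists>r0>0. \<forall>x y. x \<noteq> y \<longrightarrow> d x y \<ge> r0"
  shows "\<exists>c1>0. \<forall>x y n. hn E mu n x y \<le>
           c1 / vol E mu d x (real n powr (1 / \<beta>)) *
           exp (- ((d x y powr \<beta> / (c1 * real n)) powr (1 / (\<beta> - 1))))"
proof -
  have musym: "\<And>x y. mu x y = mu y x" and munn: "\<And>x y. mu x y \<ge> 0"
    and mupos: "\<And>x y. mu x y > 0 \<longleftrightarrow> E x y"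
    using cond unfolding conductance_def by auto
  have vnn: "vmeas E mu x \<ge> 0" for x
    unfolding vmeas_def using munn by (simp add: infsum_nonneg)
  have volnn: "vol E mu d x r \<ge> 0" for x r
    unfolding vol_def using vnn by (simp add: infsum_nonneg)
  show ?thesis
  proof (cases "\<exists>a b. E a b")
    case False
    have v0: "vmeas E mu x = 0" for x
    proof -
      have "{y. E x y} = {}" using False by auto
      then show ?thesis unfolding vmeas_def by (metis infsum_empty)
    qed
    have vol0: "vol E mu d x r = 0" for x r unfolding vol_def v0 by simp
    show ?thesis
      by (rule exI[of _ 1]) (simp add: hn_def v0 vol0)
  next
    case True
    then obtain a b where ab: "E a b" by blast
    have nb: "\<exists>w. E x w" for x
    proof (cases "x = a")
      case True then show ?thesis using ab by blast
    next
      case False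
      have "E\<^sup>*\<^sup>* x a" using graph unfolding simple_connected_graph_def by blast
      then show ?thesis using False by (cases rule: converse_rtranclpE) auto
    qed
    have vpos: "vmeas E mu x > 0" for x
    proof -
      obtain w where w: "E x w" using nb by blast
      have "mu x w \<le> vmeas E mu x"
        unfolding vmeas_def
        by (rule has_sum_le_elem[OF _ has_sum_infsum]) (use fin_mu w munn in auto)
      then show ?thesis using mupos[of x w] w by linarith
    qed
    interpret rw E mu
      by unfold_locales (use musym munn mupos fin_mu vpos in auto)
    obtain CD where CD: "CD > 0" "\<And>x n. hn E mu n x x \<le> CD / vol E mu d x (real n powr (1 / \<beta>))"
      using DUHK by blast
    obtain C where C: "C > 0" "\<And>x r s. 0 < s \<Longrightarrow> s < r \<Longrightarrow> vol E mu d x r \<le> C * (r / s) powr \<alpha> * vol E mu d x s"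
      using VG by blast
    define CV where "CV = max C 1"
    have VD: "vol E mu d x r \<le> CV * (r/s) powr \<alpha> * vol E mu d x s" if "0 < s" "s \<le> r" for x r s
    proof (cases "s = r")
      case True
      have "vol E mu d x r \<le> max C 1 * vol E mu d x r"
        using volnn[of x r] by (simp add: mult_le_cancel_right1)
      then show ?thesis using True that unfolding CV_def by simp
    next
      case False
      then have "s < r" using that by simp
      then have "vol E mu d x r \<le> C * (r / s) powr \<alpha> * vol E mu d x s" using C that by blast
      also have "\<dots> \<le> CV * (r / s) powr \<alpha> * vol E mu d x s"
        unfolding CV_def using volnn[of x s] by (intro mult_right_mono) auto
      finally show ?thesis .
    qed
    obtain CP where CP: "CP > 0" "\<And>n x r. n \<ge> 1 \<Longrightarrow> r > 0 \<Longrightarrow>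
               exit_prob E mu d x r n \<le> CP * exp (- ((r powr \<beta> / (CP * real n)) powr (1 / (\<beta> - 1))))"
      using Psi by blast
    obtain Cp0 where Cp0: "\<And>x y. E x y \<Longrightarrow> d x y \<le> Cp0" using NdU by blast
    define Cp where "Cp = max Cp0 1"
    obtain r0 where r0: "r0 > 0" "\<And>x y. x \<noteq> y \<Longrightarrow> d x y \<ge> r0" using dL by blast
    interpret hk E mu d \<alpha> \<beta> CD CV CP Cp r0
    proof (unfold_locales)
      show "\<And>x y. E x y \<Longrightarrow> d x y \<le> Cp" using Cp0 unfolding Cp_def by (meson max.coboundedI1)
    qed (use metric fin_vol alpha beta CD VD CP r0 in \<open>auto simp: CV_def Cp_def\<close>)
    show ?thesis using final .
  qed
qed

end
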